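(* Let $P$ be a convergent periodic orbit with over-rotation pair $(nr,ns)$, where $n,r,s\in\mathbb{N}$, $\gcd(r,s)=1$ and $n>1$, and suppose the code of $P$ is non-decreasing. Then the $P$-linear map $f$ has no periodic orbit of over-rotation number less than $\frac rs$; in other words, $P$ does not force any periodic orbit of over-rotation number less than $\frac rs$.
   Context: For a cycle $P$ of a map $f$, the $P$-linear map agrees with $f$ on $P$ and is affine between consecutive points of $P$. $P$ is convergent if there are no $x<y$ in $P$ with $f(x)<x$, $f(y)>y$; then the $P$-linear map has a unique fixed point $a$. Over-rotation pair: for a cycle $P$ of period $q\ge2$, $2p$ is the number of $x\in P$ with $f(x)-x$ and $f^2(x)-f(x)$ of different signs; $orp(P)=(p,q)$, $\rho(P)=p/q$ (and similarly for non-fixed periodic orbits of $f$). Write $x>_a y$ if $x<y<a$ or $x>y>a$. Code: with $\rho=\rho(P)$ and $\varphi(y)=1$ if $y>a$ and $f(y)<a$, $\varphi(y)=0$ otherwise, the code $L:P\to\mathbb{R}$ is given by $L(x_0)=0$ for the leftmost point $x_0$ of $P$ and $L(f(y))=L(y)+\rho-\varphi(y)$. The code is non-decreasing if $x>_a y$ implies $L(x)\le L(y)$ for all $x,y\in P$. *)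

theory Defs
  imports Complex_Main
begin

definition periodic_orbit :: "(real \<Rightarrow> real) \<Rightarrow> real set \<Rightarrow> bool" where
  "periodic_orbit g Q \<longleftrightarrow>
     (\<exists>x n. n > 0 \<and> (g ^^ n) x = x \<and> Q = range (\<lambda>k. (g ^^ k) x))"

definition cycle :: "(real \<Rightarrow> real) \<Rightarrow> real set \<Rightarrow> bool" where
  "cycle g P \<longleftrightarrow> periodic_orbit g P \<and> card P \<ge> 2"

definition convergent :: "(real \<Rightarrow> real) \<Rightarrow> real set \<Rightarrow> bool" where
  "convergent f P \<longleftrightarrow> \<not> (\<exists>x\<in>P. \<exists>y\<in>P. x < y \<and> f x < x \<and> f y > y)"

text \<open>The P-linear map: agrees with f on P, affine between consecutive points of P;
  extended constantly outside [min P, max P] (this adds no periodic points).\<close>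
definition plin :: "(real \<Rightarrow> real) \<Rightarrow> real set \<Rightarrow> real \<Rightarrow> real" where
  "plin f P x =
     (if x \<le> Min P then f (Min P)
      else if x \<ge> Max P then f (Max P)
      else (let a = Max {y\<in>P. y \<le> x}; b = Min {y\<in>P. x < y}
            in f a + (f b - f a) * (x - a) / (b - a)))"

text \<open>Number of points x of Q where g x - x and g (g x) - g x have different signs
  (this number is 2p, where (p,q) is the over-rotation pair).\<close>
definition ocount :: "(real \<Rightarrow> real) \<Rightarrow> real set \<Rightarrow> nat" where
  "ocount g Q = card {x\<in>Q. (g x - x) * (g (g x) - g x) < 0}"

definition orp :: "(real \<Rightarrow> real) \<Rightarrow> real set \<Rightarrow> nat \<times> nat" where
  "orp g Q = (ocount g Q div 2, card Q)"

definition orn :: "(real \<Rightarrow> real) \<Rightarrow> real set \<Rightarrow> real" where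
  "orn g Q = real (ocount g Q div 2) / real (card Q)"

definition phi :: "(real \<Rightarrow> real) \<Rightarrow> real \<Rightarrow> real \<Rightarrow> real" where
  "phi f a y = (if y > a \<and> f y < a then 1 else 0)"

text \<open>The code L of P (w.r.t. the fixed point a): L(x0) = 0 for x0 = min P and
  L(f y) = L y + rho - phi y; unfolded along the orbit of x0.\<close>
definition code :: "(real \<Rightarrow> real) \<Rightarrow> real set \<Rightarrow> real \<Rightarrow> real \<Rightarrow> real" where
  "code f P a x =
     (let k = (LEAST k. (f ^^ k) (Min P) = x)
      in real k * orn f P - (\<Sum>j<k. phi f a ((f ^^ j) (Min P))))"

definition code_nondecreasing :: "(real \<Rightarrow> real) \<Rightarrow> real set \<Rightarrow> real \<Rightarrow> bool" where
  "code_nondecreasing f P a \<longleftrightarrow>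
     (\<forall>x\<in>P. \<forall>y\<in>P. ((x < y \<and> y < a) \<or> (x > y \<and> y > a)) \<longrightarrow> code f P a x \<le> code f P a y)"

end

theory Submission imports Defs begin

lemma funpow_fix: "g a = a \<Longrightarrow> (g ^^ k) a = a"
  by (induction k) auto

lemma funpow_swap: "(g ^^ m) ((g ^^ n) x) = (g ^^ n) ((g ^^ m) x)"
  by (metis add.commute comp_apply funpow_add)

lemma funpow_mult_fix: "(g ^^ N) z = z \<Longrightarrow> (g ^^ (N * c)) z = z"
proof (induction c)
  case 0 then show ?case by simp
next
  case (Suc c)
  have "(g ^^ (N * Suc c)) z = (g ^^ N) ((g ^^ (N * c)) z)"
    by (simp add: funpow_add)
  then show ?case using Suc by simp
qed

lemma funpow_mod: "(g ^^ N) z = z \<Longrightarrow> (g ^^ k) z = (g ^^ (k mod N)) z"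
proof -
  assume h: "(g ^^ N) z = z"
  have "k = k mod N + N * (k div N)" by simp
  then have "(g ^^ k) z = (g ^^ (k mod N)) ((g ^^ (N * (k div N))) z)"
    by (metis comp_apply funpow_add)
  then show ?thesis using funpow_mult_fix[OF h] by simp
qed

lemma po_from:
  assumes "periodic_orbit g Q" "z \<in> Q"
  shows "Q = range (\<lambda>k. (g ^^ k) z) \<and> (\<exists>N>0. (g ^^ N) z = z)"
proof -
  obtain x N where N: "N > 0" "(g ^^ N) x = x" and Q: "Q = range (\<lambda>k. (g ^^ k) x)"
    using assms(1) unfolding periodic_orbit_def by blast
  obtain i where i: "z = (g ^^ i) x" using assms(2) Q by blast
  have zN: "(g ^^ N) z = z" using i N(2) funpow_swap by metis
  have "range (\<lambda>k. (g ^^ k) z) \<subseteq> Q"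
  proof
    fix y assume "y \<in> range (\<lambda>k. (g ^^ k) z)"
    then obtain k where "y = (g ^^ k) z" by blast
    then have "y = (g ^^ (k + i)) x" using i by (simp add: funpow_add)
    then show "y \<in> Q" using Q by blast
  qed
  moreover have "Q \<subseteq> range (\<lambda>k. (g ^^ k) z)"
  proof
    fix y assume "y \<in> Q"
    then obtain j where j: "y = (g ^^ j) x" using Q by blast
    have "1 * (i + 1) \<le> N * (i + 1)" using N(1) by (intro mult_right_mono) auto
    then have e: "j + N * (i + 1) = (j + N * (i + 1) - i) + i" by simp
    have "(g ^^ (j + N * (i + 1))) x = y"
      using j funpow_mult_fix[OF N(2)] by (simp add: funpow_add del: mult_Suc_right)
    then have "(g ^^ (j + N * (i + 1) - i)) z = y"
      using e i by (metis comp_apply funpow_add)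
    then show "y \<in> range (\<lambda>k. (g ^^ k) z)" by (metis rangeI)
  qed
  ultimately show ?thesis using zN N(1) by blast
qed

lemma orbit_period:
  assumes N: "N > 0" "(g ^^ N) z = z"
  defines "k0 \<equiv> LEAST k. 0 < k \<and> (g ^^ k) z = z"
  shows "0 < k0" "(g ^^ k0) z = z"
    "\<And>i j. i < j \<Longrightarrow> j < k0 \<Longrightarrow> (g ^^ i) z \<noteq> (g ^^ j) z"
    "range (\<lambda>k. (g ^^ k) z) = (\<lambda>k. (g ^^ k) z) ` {..<k0}"
    "inj_on (\<lambda>k. (g ^^ k) z) {..<k0}"
proof -
  have ex: "0 < k0 \<and> (g ^^ k0) z = z" unfolding k0_def by (rule LeastI[of _ N]) (use N in auto)
  then show "0 < k0" "(g ^^ k0) z = z" by auto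
  show dist: "(g ^^ i) z \<noteq> (g ^^ j) z" if "i < j" "j < k0" for i j
  proof
    assume eq: "(g ^^ i) z = (g ^^ j) z"
    have "(g ^^ (k0 - j)) ((g ^^ j) z) = (g ^^ k0) z"
      using that by (metis comp_apply funpow_add le_add_diff_inverse2 less_imp_le)
    then have "(g ^^ (k0 - j + i)) z = z" using eq ex by (simp add: funpow_add)
    moreover have "0 < k0 - j + i" "k0 - j + i < k0" using that by auto
    ultimately show False using not_less_Least[of "k0 - j + i" "\<lambda>k. 0 < k \<and> (g ^^ k) z = z"]
      unfolding k0_def by blast
  qed
  show "range (\<lambda>k. (g ^^ k) z) = (\<lambda>k. (g ^^ k) z) ` {..<k0}"
  proof
    show "range (\<lambda>k. (g ^^ k) z) \<subseteq> (\<lambda>k. (g ^^ k) z) ` {..<k0}"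
    proof
      fix y assume "y \<in> range (\<lambda>k. (g ^^ k) z)"
      then obtain k where "y = (g ^^ k) z" by blast
      then have "y = (g ^^ (k mod k0)) z" using funpow_mod ex by metis
      moreover have "k mod k0 < k0" using ex by simp
      ultimately show "y \<in> (\<lambda>k. (g ^^ k) z) ` {..<k0}" by blast
    qed
  qed auto
  show "inj_on (\<lambda>k. (g ^^ k) z) {..<k0}"
    unfolding inj_on_def by (metis dist lessThan_iff linorder_neqE_nat)
qed


definition consec :: "real set \<Rightarrow> real \<Rightarrow> real \<Rightarrow> bool" where
  "consec P u v \<longleftrightarrow> u \<in> P \<and> v \<in> P \<and> u < v \<and> (\<forall>y\<in>P. \<not> (u < y \<and> y < v))"

lemma plin_P: assumes "finite P" "p \<in> P" shows "plin f P p = f p"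
proof -
  have m: "Min P \<le> p" "p \<le> Max P" using assms by auto
  show ?thesis
  proof (cases "p \<le> Min P")
    case True then have "p = Min P" using m by simp
    then show ?thesis by (simp add: plin_def)
  next
    case False
    show ?thesis
    proof (cases "p \<ge> Max P")
      case True then have "p = Max P" using m by simp
      then show ?thesis using False by (simp add: plin_def)
    next
      case F2: False
      have "Max {y\<in>P. y \<le> p} = p" using assms by (intro Max_eqI) auto
      then show ?thesis using False F2 by (simp add: plin_def Let_def)
    qed
  qed
qed

lemma plin_lin:
  assumes "finite P" "consec P u v" "u \<le> x" "x \<le> v"
  shows "plin f P x = f u + ((f v - f u) / (v - u)) * (x - u)"
proof -
  have c: "u \<in> P" "v \<in> P" "u < v" "\<And>y. y \<in> P \<Longrightarrow> \<not> (u < y \<and> y < v)"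
    using assms(2) unfolding consec_def by auto
  consider "x = u" | "x = v" | "u < x \<and> x < v" using assms by linarith
  then show ?thesis
  proof cases
    case 1 then show ?thesis using plin_P[OF assms(1) c(1)] by simp
  next
    case 2 then show ?thesis using plin_P[OF assms(1) c(2)] c(3) by simp
  next
    case 3
    have m: "Min P \<le> u" "v \<le> Max P" using assms(1) c by auto
    have mx: "Max {y\<in>P. y \<le> x} = u"
    proof (rule Max_eqI)
      fix y assume "y \<in> {y\<in>P. y \<le> x}"
      then show "y \<le> u" using c(4)[of y] 3 by auto
    qed (use assms(1) c 3 in auto)
    have mn: "Min {y\<in>P. x < y} = v"
    proof (rule Min_eqI)
      fix y assume "y \<in> {y\<in>P. x < y}"
      then show "v \<le> y" using c(4)[of y] 3 by auto
    qed (use assms(1) c 3 in auto)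
    have "\<not> x \<le> Min P" "\<not> x \<ge> Max P" using m 3 by auto
    then show ?thesis using mx mn by (simp add: plin_def Let_def)
  qed
qed

lemma consec_exists:
  assumes "finite P" "2 \<le> card P" "Min P \<le> x" "x \<le> Max P"
  shows "\<exists>u v. consec P u v \<and> u \<le> x \<and> x \<le> v"
proof -
  have ne: "P \<noteq> {}" using assms(2) by auto
  show ?thesis
  proof (cases "x < Max P")
    case True
    define u where "u = Max {y\<in>P. y \<le> x}"
    define v where "v = Min {y\<in>P. x < y}"
    have "Min P \<in> {y\<in>P. y \<le> x}" using assms Min_in[OF assms(1) ne] by auto
    then have s1: "finite {y\<in>P. y \<le> x}" "{y\<in>P. y \<le> x} \<noteq> {}"
      using assms by auto
    have "Max P \<in> {y\<in>P. x < y}" using True Max_in[OF assms(1) ne] by auto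
    then have s2: "finite {y\<in>P. x < y}" "{y\<in>P. x < y} \<noteq> {}"
      using assms by auto
    have u: "u \<in> P" "u \<le> x" using Max_in[OF s1] unfolding u_def by auto
    have v: "v \<in> P" "x < v" using Min_in[OF s2] unfolding v_def by auto
    have nb: "\<not> (u < y \<and> y < v)" if "y \<in> P" for y
    proof
      assume h: "u < y \<and> y < v"
      show False
      proof (cases "y \<le> x")
        case True then have "y \<le> u" unfolding u_def using s1 that by (intro Max_ge) auto
        then show False using h by simp
      next
        case False then have "v \<le> y" unfolding v_def using s2 that by (intro Min_le) auto
        then show False using h by simp
      qed
    qed
    then show ?thesis unfolding consec_def using u v by (intro exI[of _ u] exI[of _ v]) auto
  next
    case False
    then have xM: "x = Max P" using assms by simp
    obtain w where w: "w \<in> P" "w \<noteq> Max P"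
    proof -
      have "P \<noteq> {Max P}"
      proof
        assume h: "P = {Max P}" have "card P = card {Max P}" using h by (rule arg_cong)
        then have "card P = 1" by simp
        then show False using assms(2) by simp
      qed
      then show ?thesis using that Max_in[OF assms(1) ne] by blast
    qed
    have wl: "w < Max P" using w assms(1) by (meson Max_ge order_less_le)
    define u where "u = Max {y\<in>P. y < Max P}"
    have s1: "finite {y\<in>P. y < Max P}" "{y\<in>P. y < Max P} \<noteq> {}"
      using assms w wl by auto
    have u: "u \<in> P" "u < Max P" using Max_in[OF s1] unfolding u_def by auto
    have nb: "\<not> (u < y \<and> y < Max P)" if "y \<in> P" for y
    proof
      assume h: "u < y \<and> y < Max P"
      then have "y \<le> u" unfolding u_def using s1 that by (intro Max_ge) auto
      then show False using h by simp
    qed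
    then show ?thesis unfolding consec_def using u xM Max_in[OF assms(1) ne]
      by (intro exI[of _ u] exI[of _ "Max P"]) auto
  qed
qed

definition betw :: "real \<Rightarrow> real \<Rightarrow> real \<Rightarrow> bool" where
  "betw y p q \<longleftrightarrow> (p \<le> y \<and> y \<le> q) \<or> (q \<le> y \<and> y \<le> p)"

lemma affine_betw:
  fixes c K u z1 z2 x :: real
  assumes "z1 \<le> x" "x \<le> z2"
  shows "betw (c + K * (x - u)) (c + K * (z1 - u)) (c + K * (z2 - u))"
proof (cases "K \<ge> 0")
  case True
  have "K * (z1 - u) \<le> K * (x - u)" "K * (x - u) \<le> K * (z2 - u)"
    using assms True by (auto intro: mult_left_mono)
  then show ?thesis unfolding betw_def by auto
next
  case False
  have "K * (x - u) \<le> K * (z1 - u)" "K * (z2 - u) \<le> K * (x - u)"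
    using assms False by (auto intro: mult_left_mono_neg)
  then show ?thesis unfolding betw_def by auto
qed


lemma K_end: "(u::real) < v \<Longrightarrow> f u + ((f v - f u) / (v - u)) * (v - u) = f v"
  by simp

locale setting =
  fixes f :: "real \<Rightarrow> real" and P :: "real set" and a :: real
  assumes fin: "finite P" and card2: "2 \<le> card P"
    and fP: "\<And>p. p \<in> P \<Longrightarrow> f p \<in> P"
    and nofix: "\<And>p. p \<in> P \<Longrightarrow> f p \<noteq> p"
    and conv: "convergent f P"
    and afix: "plin f P a = a"
begin

abbreviation "g \<equiv> plin f P"

lemma ne: "P \<noteq> {}" using card2 by auto

lemma a_range: "Min P < a" "a < Max P" "a \<notin> P"
proof -
  have m: "Min P \<in> P" "Max P \<in> P" using Min_in Max_in fin ne by auto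
  show "Min P < a"
  proof (rule ccontr)
    assume "\<not> Min P < a"
    then have "g a = f (Min P)" by (simp add: plin_def)
    then have "f (Min P) \<le> Min P" using afix \<open>\<not> Min P < a\<close> by simp
    moreover have "Min P \<le> f (Min P)" using fP[OF m(1)] fin by simp
    ultimately show False using nofix[OF m(1)] by simp
  qed
  show "a < Max P"
  proof (rule ccontr)
    assume h: "\<not> a < Max P"
    have "\<not> a \<le> Min P" using \<open>Min P < a\<close> by simp
    then have "g a = f (Max P)" using h by (simp add: plin_def)
    then have "f (Max P) \<ge> Max P" using afix h by simp
    moreover have "f (Max P) \<le> Max P" using fP[OF m(2)] fin by simp
    ultimately show False using nofix[OF m(2)] by simp
  qed
  show "a \<notin> P"
  proof
    assume "a \<in> P" then have "f a = a" using plin_P[OF fin] afix by metis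
    then show False using nofix \<open>a \<in> P\<close> by blast
  qed
qed

lemma sideP: assumes "p \<in> P" shows "p < a \<Longrightarrow> f p > p" "p > a \<Longrightarrow> f p < p"
proof -
  obtain u v where uv: "consec P u v" "u \<le> a" "a \<le> v"
    using consec_exists[OF fin card2, of a] a_range by force
  have c: "u \<in> P" "v \<in> P" "u < v" "\<And>y. y \<in> P \<Longrightarrow> \<not> (u < y \<and> y < v)"
    using uv(1) unfolding consec_def by auto
  have ua: "u < a" "a < v" using uv c a_range(3) by (metis order_le_less)+
  define K where "K = (f v - f u) / (v - u)"
  have ga: "a = f u + K * (a - u)" using plin_lin[OF fin uv, of f] afix K_def by simp
  have fv: "f v = f u + K * (v - u)" using K_end[OF c(3), of f] K_def by simp
  have Du: "f u - u = (1 - K) * (a - u)" using ga by (simp add: algebra_simps)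
  have Dv: "f v - v = (1 - K) * (a - v)" using ga fv by (simp add: algebra_simps)
  have K1: "1 - K > 0"
  proof (rule ccontr)
    assume "\<not> 1 - K > 0"
    then have "f u - u \<le> 0" "f v - v \<ge> 0" using Du Dv ua
      by (simp_all add: mult_nonpos_nonneg mult_nonpos_nonpos)
    then have "f u < u" "f v > v" using nofix c(1,2) by (metis diff_le_0_iff_le order_less_le diff_ge_0_iff_ge)+
    then show False using conv c unfolding convergent_def by blast
  qed
  have "(1 - K) * (a - u) > 0" using K1 ua by simp
  then have fu: "f u > u" using Du by linarith
  have "(1 - K) * (a - v) < 0" using K1 ua by (simp add: mult_pos_neg)
  then have fv': "f v < v" using Dv by linarith
  have split: "p \<le> u \<or> v \<le> p" using c(4)[OF assms] by auto
  show "p < a \<Longrightarrow> f p > p"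
  proof -
    assume "p < a"
    then have "p \<le> u" using split ua by linarith
    show "f p > p"
    proof (rule ccontr)
      assume "\<not> f p > p" then have "f p < p" using nofix[OF assms] by linarith
      then have "p \<noteq> u" using fu by auto
      then show False using \<open>p \<le> u\<close> \<open>f p < p\<close> fu conv assms c(1) unfolding convergent_def by force
    qed
  qed
  show "p > a \<Longrightarrow> f p < p"
  proof -
    assume "p > a"
    then have "v \<le> p" using split ua by linarith
    show "f p < p"
    proof (rule ccontr)
      assume "\<not> f p < p" then have "f p > p" using nofix[OF assms] by linarith
      then have "p \<noteq> v" using fv' by auto
      then show False using \<open>v \<le> p\<close> \<open>f p > p\<close> fv' conv assms c(2) unfolding convergent_def by force
    qed
  qed
qed

end

context setting begin

lemma side0: assumes "Min P \<le> x" "x \<le> Max P"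
  shows "(x < a \<longrightarrow> g x > x) \<and> (x > a \<longrightarrow> g x < x)"
proof -
  obtain u v where uv: "consec P u v" "u \<le> x" "x \<le> v"
    using consec_exists[OF fin card2 assms] by blast
  have c: "u \<in> P" "v \<in> P" "u < v"
    using uv(1) unfolding consec_def by auto
  define K where "K = (f v - f u) / (v - u)"
  have gx: "g x = f u + K * (x - u)" using plin_lin[OF fin uv] K_def by simp
  have fv: "f v = f u + K * (v - u)" using K_end[OF c(3), of f] K_def by simp
  have bt: "betw ((f u - u) + (K - 1) * (x - u)) ((f u - u) + (K - 1) * (u - u)) ((f u - u) + (K - 1) * (v - u))"
    using affine_betw[OF uv(2,3)] by blast
  have e1: "(f u - u) + (K - 1) * (x - u) = g x - x" using gx by (simp add: algebra_simps)
  have e2: "(f u - u) + (K - 1) * (v - u) = f v - v" using fv by (simp add: algebra_simps)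
  have bt': "betw (g x - x) (f u - u) (f v - v)" using bt e1 e2 by simp
  consider "v < a" | "a < u" | "u < a \<and> a < v"
    using a_range(3) c by (metis linorder_neqE_linordered_idom order_less_trans)
  then show ?thesis
  proof cases
    case 1
    have "f u - u > 0" "f v - v > 0" using sideP c 1 by auto
    then have "g x - x > 0" using bt' unfolding betw_def by linarith
    then show ?thesis using 1 uv by auto
  next
    case 2
    have "f u - u < 0" "f v - v < 0" using sideP c 2 by auto
    then have "g x - x < 0" using bt' unfolding betw_def by linarith
    then show ?thesis using 2 uv by auto
  next
    case 3
    have ga: "a = f u + K * (a - u)" using plin_lin[OF fin uv(1), of a f] afix K_def 3 by simp
    have Du: "f u - u = (1 - K) * (a - u)" using ga by (simp add: algebra_simps)
    have Dx: "g x - x = (1 - K) * (a - x)" using ga gx by (simp add: algebra_simps)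
    have "f u - u > 0" using sideP c 3 by auto
    then have K1: "1 - K > 0" using Du 3 by (simp add: zero_less_mult_iff)
    show ?thesis
    proof (intro conjI impI)
      assume "x < a" then have "(1 - K) * (a - x) > 0" using K1 by simp
      then show "g x > x" using Dx by linarith
    next
      assume "x > a" then have "(1 - K) * (a - x) < 0" using K1 by (simp add: mult_pos_neg)
      then show "g x < x" using Dx by linarith
    qed
  qed
qed

lemma grange: "Min P \<le> g x \<and> g x \<le> Max P"
proof -
  have m: "Min P \<in> P" "Max P \<in> P" using Min_in Max_in fin ne by auto
  have inP: "\<And>p. p \<in> P \<Longrightarrow> Min P \<le> f p \<and> f p \<le> Max P" using fP fin by auto
  show ?thesis
  proof (cases "x \<le> Min P")
    case True then show ?thesis using inP[OF m(1)] by (simp add: plin_def)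
  next
    case F1: False
    show ?thesis
    proof (cases "x \<ge> Max P")
      case True then show ?thesis using inP[OF m(2)] F1 by (simp add: plin_def)
    next
      case False
      obtain u v where uv: "consec P u v" "u \<le> x" "x \<le> v"
        using consec_exists[OF fin card2, of x] F1 False by force
      have c: "u \<in> P" "v \<in> P" "u < v"
        using uv(1) unfolding consec_def by auto
      define K where "K = (f v - f u) / (v - u)"
      have gx: "g x = f u + K * (x - u)" using plin_lin[OF fin uv] K_def by simp
      have fv: "f v = f u + K * (v - u)" using K_end[OF c(3), of f] K_def by simp
      have bt: "betw (f u + K * (x - u)) (f u + K * (u - u)) (f u + K * (v - u))"
        using affine_betw[OF uv(2,3)] by blast
      then have "betw (g x) (f u) (f v)" using gx fv by simp
      then show ?thesis using inP[OF c(1)] inP[OF c(2)] unfolding betw_def by linarith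
    qed
  qed
qed

end

lemma sgn_prod:
  fixes d1 d2 x y a :: real
  assumes "x \<noteq> a" "y \<noteq> a" "x < a \<longrightarrow> d1 > 0" "x > a \<longrightarrow> d1 < 0"
    "y < a \<longrightarrow> d2 > 0" "y > a \<longrightarrow> d2 < 0"
  shows "d1 * d2 < 0 \<longleftrightarrow> (x < a \<and> y > a) \<or> (x > a \<and> y < a)"
proof -
  consider "x < a" "y < a" | "x < a" "y > a" | "x > a" "y < a" | "x > a" "y > a"
    using assms(1,2) by (meson linorder_neqE_linordered_idom)
  then show ?thesis
  proof cases
    case 1 then have "d1 * d2 > 0" using assms by simp
    then show ?thesis using 1 by auto
  next
    case 2 then have "d1 * d2 < 0" using assms by (simp add: mult_pos_neg)
    then show ?thesis using 2 by auto
  next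
    case 3 then have "d1 * d2 < 0" using assms by (simp add: mult_neg_pos)
    then show ?thesis using 3 by auto
  next
    case 4 then have "d1 * d2 > 0" using assms by (simp add: mult_neg_neg)
    then show ?thesis using 4 by auto
  qed
qed

lemma crossing:
  fixes h :: "real \<Rightarrow> real"
  assumes fin: "finite Q" and surj: "h ` Q = Q" and aQ: "a \<notin> Q"
    and sd: "\<And>x. x \<in> Q \<Longrightarrow> (x < a \<longrightarrow> h x > x) \<and> (x > a \<longrightarrow> h x < x)"
  shows "ocount h Q = 2 * card {x\<in>Q. x > a \<and> h x < a}"
proof -
  have inj: "inj_on h Q" using finite_surj_inj[OF fin] surj by simp
  have hQ: "\<And>x. x \<in> Q \<Longrightarrow> h x \<in> Q" using surj by blast
  define QL where "QL = {x\<in>Q. x < a}"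
  define A where "A = {x\<in>Q. x < a \<and> h x > a}"
  define B where "B = {x\<in>Q. x > a \<and> h x < a}"
  define C where "C = {x\<in>Q. x < a \<and> h x < a}"
  have neq: "\<And>x. x \<in> Q \<Longrightarrow> x \<noteq> a" using aQ by blast
  have S: "{x\<in>Q. (h x - x) * (h (h x) - h x) < 0} = A \<union> B"
  proof (rule set_eqI)
    fix x
    show "x \<in> {x\<in>Q. (h x - x) * (h (h x) - h x) < 0} \<longleftrightarrow> x \<in> A \<union> B"
    proof (cases "x \<in> Q")
      case True
      have hx: "h x \<in> Q" using hQ True .
      have n1: "x \<noteq> a" "h x \<noteq> a" using neq True hx by auto
      have s1: "(x < a \<longrightarrow> h x > x) \<and> (x > a \<longrightarrow> h x < x)" using sd True .
      have s2: "(h x < a \<longrightarrow> h (h x) > h x) \<and> (h x > a \<longrightarrow> h (h x) < h x)" using sd hx .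
      have "(h x - x) * (h (h x) - h x) < 0 \<longleftrightarrow> (x < a \<and> h x > a) \<or> (x > a \<and> h x < a)"
        using sgn_prod[of x a "h x" "h x - x" "h (h x) - h x"] n1 s1 s2 by simp
      then show ?thesis using True unfolding A_def B_def by auto
    next
      case False then show ?thesis unfolding A_def B_def by auto
    qed
  qed
  have fA: "finite A" "finite B" "finite C" using fin unfolding A_def B_def C_def by auto
  have d1: "A \<inter> B = {}" unfolding A_def B_def by auto
  have "card (A \<union> B) = card A + card B" using card_Un_disjoint[OF fA(1,2) d1] .
  have n2: "\<And>x. x \<in> Q \<Longrightarrow> h x \<noteq> a" using neq hQ by blast
  have QL1: "QL = C \<union> A"
  proof (rule set_eqI)
    fix x show "x \<in> QL \<longleftrightarrow> x \<in> C \<union> A"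
    proof (cases "x \<in> Q")
      case True then have "h x \<noteq> a" using n2 by blast
      then have "h x < a \<or> h x > a" by linarith
      then show ?thesis unfolding QL_def A_def C_def using True by auto
    qed (auto simp: QL_def A_def C_def)
  qed
  have QL1': "C \<inter> A = {}" unfolding A_def C_def by auto
  have QL2: "Q \<inter> h -` QL = C \<union> B"
  proof (rule set_eqI)
    fix x show "x \<in> Q \<inter> h -` QL \<longleftrightarrow> x \<in> C \<union> B"
    proof (cases "x \<in> Q")
      case True then have "x \<noteq> a" "h x \<in> Q" using neq hQ by blast+
      then have "x < a \<or> x > a" by linarith
      then show ?thesis unfolding QL_def B_def C_def using True \<open>h x \<in> Q\<close> by auto
    qed (auto simp: QL_def B_def C_def)
  qed
  have QL2': "C \<inter> B = {}" unfolding B_def C_def by auto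
  have im: "h ` (Q \<inter> h -` QL) = QL"
  proof
    show "h ` (Q \<inter> h -` QL) \<subseteq> QL" by auto
    show "QL \<subseteq> h ` (Q \<inter> h -` QL)"
    proof
      fix y assume y: "y \<in> QL"
      then have "y \<in> h ` Q" using surj unfolding QL_def by auto
      then obtain x where "x \<in> Q" "y = h x" by auto
      then show "y \<in> h ` (Q \<inter> h -` QL)" using y by auto
    qed
  qed
  have "card QL = card (Q \<inter> h -` QL)"
    using card_image[OF inj_on_subset[OF inj, of "Q \<inter> h -` QL"]] im by auto
  then have "card C + card A = card C + card B"
    using QL1 QL2 card_Un_disjoint[OF fA(3,1) QL1'] card_Un_disjoint[OF fA(3,2) QL2'] by simp
  then have "card A = card B" by simp
  then show ?thesis unfolding ocount_def S
    using card_Un_disjoint[OF fA(1,2) d1] B_def by simp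
qed


lemma consec_max: assumes "finite P" "consec P u v" "u < x" "x < v"
  shows "Max {p\<in>P. p \<le> x} = u"
proof (rule Max_eqI)
  fix y assume "y \<in> {p\<in>P. p \<le> x}"
  then show "y \<le> u" using assms unfolding consec_def by force
qed (use assms in \<open>auto simp: consec_def\<close>)

lemma consec_min: assumes "finite P" "consec P u v" "u < x" "x < v"
  shows "Min {p\<in>P. x \<le> p} = v"
proof (rule Min_eqI)
  fix y assume "y \<in> {p\<in>P. x \<le> p}"
  then show "v \<le> y" using assms unfolding consec_def by force
qed (use assms in \<open>auto simp: consec_def\<close>)

definition far :: "real \<Rightarrow> real \<Rightarrow> real \<Rightarrow> bool" where
  "far a y p \<longleftrightarrow> (a < y \<and> y \<le> p) \<or> (p \<le> y \<and> y < a)"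

lemma betw_far: "betw y p q \<Longrightarrow> y \<noteq> a \<Longrightarrow> far a y p \<or> far a y q"
  unfolding betw_def far_def by auto

locale setting2 = setting +
  fixes L :: "real \<Rightarrow> real" and \<rho> :: real
  assumes C1: "\<And>y. y \<in> P \<Longrightarrow> L (f y) = L y + \<rho> - phi f a y"
    and ND: "\<And>x y. x \<in> P \<Longrightarrow> y \<in> P \<Longrightarrow> (x < y \<and> y < a) \<or> (x > y \<and> y > a) \<Longrightarrow> L x \<le> L y"
begin

definition Le :: "real \<Rightarrow> real" where
  "Le x = (if x < a then L (Max {p\<in>P. p \<le> x}) else L (Min {p\<in>P. x \<le> p}))"

lemma M1: assumes "p \<in> P" shows "Le p = L p"
proof -
  have "p \<noteq> a" using a_range assms by auto
  have "Max {q\<in>P. q \<le> p} = p" using assms fin by (intro Max_eqI) auto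
  moreover have "Min {q\<in>P. p \<le> q} = p" using assms fin by (intro Min_eqI) auto
  ultimately show ?thesis unfolding Le_def by simp
qed

lemma M2: assumes "y \<noteq> a" "w \<in> P" "far a y w" shows "L w \<le> Le y"
proof (cases "y < a")
  case True
  then have fw: "w \<le> y" using assms(3) unfolding far_def by auto
  have s: "finite {q\<in>P. q \<le> y}" "w \<in> {q\<in>P. q \<le> y}" using fin assms(2) fw by auto
  define p0 where "p0 = Max {q\<in>P. q \<le> y}"
  have "p0 \<in> {q\<in>P. q \<le> y}" unfolding p0_def using s by (intro Max_in) auto
  then have p0: "p0 \<in> P" "p0 \<le> y" "w \<le> p0" using Max_ge[OF s] unfolding p0_def by auto
  have "L w \<le> L p0"
  proof (cases "w = p0")
    case False then show ?thesis using ND[OF assms(2) p0(1)] p0 True by simp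
  qed simp
  then show ?thesis unfolding Le_def p0_def using True by simp
next
  case False
  then have ya: "y > a" using assms(1) by simp
  then have fw: "y \<le> w" using assms(3) unfolding far_def by auto
  have s: "finite {q\<in>P. y \<le> q}" "w \<in> {q\<in>P. y \<le> q}" using fin assms(2) fw by auto
  define p0 where "p0 = Min {q\<in>P. y \<le> q}"
  have "p0 \<in> {q\<in>P. y \<le> q}" unfolding p0_def using s by (intro Min_in) auto
  then have p0: "p0 \<in> P" "y \<le> p0" "p0 \<le> w" using Min_le[OF s] unfolding p0_def by auto
  have "L w \<le> L p0"
  proof (cases "w = p0")
    case False then show ?thesis using ND[OF assms(2) p0(1)] p0 ya by simp
  qed simp
  then show ?thesis unfolding Le_def p0_def using False by simp
qed

lemma reach_ok:
  assumes "w \<in> P" "g x \<noteq> a" "far a (g x) (f w)"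
    "L w - phi f a w \<ge> Le x - (if x > a \<and> g x < a then 1 else 0)"
  shows "Le (g x) \<ge> Le x + \<rho> - (if x > a \<and> g x < a then 1 else 0)"
proof -
  have "L (f w) \<le> Le (g x)" using M2[OF assms(2) fP[OF assms(1)] assms(3)] .
  then show ?thesis using C1[OF assms(1)] assms(4) by linarith
qed

lemma KEY:
  assumes "Min P \<le> x" "x \<le> Max P" "x \<noteq> a" "g x \<noteq> a"
  shows "Le (g x) \<ge> Le x + \<rho> - (if x > a \<and> g x < a then 1 else 0)"
proof (cases "x \<in> P")
  case True
  have gx: "g x = f x" using plin_P[OF fin True] .
  have "far a (g x) (f x)" using assms(4) gx unfolding far_def by auto
  moreover have "L x - phi f a x \<ge> Le x - (if x > a \<and> g x < a then 1 else 0)"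
    using M1[OF True] gx by (simp add: phi_def)
  ultimately show ?thesis using reach_ok[OF True assms(4)] by blast
next
  case xP: False
  obtain u v where uv: "consec P u v" "u \<le> x" "x \<le> v"
    using consec_exists[OF fin card2 assms(1,2)] by blast
  have c: "u \<in> P" "v \<in> P" "u < v"
    using uv(1) unfolding consec_def by auto
  have ux: "u < x" "x < v" using uv c xP by (metis order_le_less)+
  define K where "K = (f v - f u) / (v - u)"
  have gx: "g x = f u + K * (x - u)" using plin_lin[OF fin uv] K_def by simp
  have fv: "f v = f u + K * (v - u)" using K_end[OF c(3), of f] K_def by simp
  have bt: "betw (f u + K * (x - u)) (f u + K * (u - u)) (f u + K * (v - u))"
    using affine_betw[OF uv(2,3)] by blast
  then have btuv: "betw (g x) (f u) (f v)" using gx fv by simp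
  have phi0: "\<And>w. w < a \<Longrightarrow> phi f a w = 0" by (simp add: phi_def)
  consider "v < a" | "a < u" | "u < a \<and> a < v"
    using a_range(3) c by (metis linorder_neqE_linordered_idom order_less_trans)
  then show ?thesis
  proof cases
    case 1
    then have xa: "x < a" using ux by simp
    have Lex: "Le x = L u" unfolding Le_def using xa consec_max[OF fin uv(1) ux] by simp
    have Lw: "L u \<le> L w" if "w = u \<or> w = v" for w
      using that ND[OF c(1) c(2)] 1 c(3) by auto
    from betw_far[OF btuv assms(4)] obtain w where w: "w = u \<or> w = v" "far a (g x) (f w)" by blast
    have wP: "w \<in> P" using w c by auto
    have "w < a" using w 1 c by auto
    then show ?thesis using reach_ok[OF wP assms(4) w(2)] Lw[OF w(1)] Lex phi0 xa by simp
  next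
    case 2
    then have xa: "x > a" using ux by simp
    have Lex: "Le x = L v" unfolding Le_def using xa consec_min[OF fin uv(1) ux] by simp
    have Lw: "L v \<le> L w" if "w = u \<or> w = v" for w
      using that ND[OF c(2) c(1)] 2 c(3) by auto
    from betw_far[OF btuv assms(4)] obtain w where w: "w = u \<or> w = v" "far a (g x) (f w)" by blast
    have wP: "w \<in> P" using w c by auto
    have "L w - phi f a w \<ge> Le x - (if x > a \<and> g x < a then 1 else 0)"
    proof (cases "g x < a")
      case True then show ?thesis using Lw[OF w(1)] Lex xa by (simp add: phi_def)
    next
      case False
      then have "f w > a" using w(2) assms(4) unfolding far_def by auto
      then show ?thesis using Lw[OF w(1)] Lex xa False by (simp add: phi_def)
    qed
    then show ?thesis using reach_ok[OF wP assms(4) w(2)] by simp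
  next
    case 3
    have ga: "a = f u + K * (a - u)" using plin_lin[OF fin uv(1), of a f] afix K_def 3 by simp
    show ?thesis
    proof (cases "x < a")
      case True
      have "betw (f u + K * (x - u)) (f u + K * (u - u)) (f u + K * (a - u))"
        using affine_betw[of u x a "f u" K u] True uv by auto
      then have "betw (g x) (f u) a" using gx ga by simp
      then have fr: "far a (g x) (f u)" using assms(4) unfolding betw_def far_def by auto
      have Lex: "Le x = L u" unfolding Le_def using True consec_max[OF fin uv(1) ux] by simp
      show ?thesis using reach_ok[OF c(1) assms(4) fr] Lex phi0[of u] 3 True by simp
    next
      case False
      then have xa: "x > a" using assms(3) by simp
      have "betw (f u + K * (x - u)) (f u + K * (a - u)) (f u + K * (v - u))"
        using affine_betw[of a x v "f u" K u] xa uv by auto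
      then have "betw (g x) a (f v)" using gx ga fv by simp
      then have fr: "far a (g x) (f v)" using assms(4) unfolding betw_def far_def by auto
      have Lex: "Le x = L v" unfolding Le_def using xa consec_min[OF fin uv(1) ux] by simp
      have "phi f a v = (if x > a \<and> g x < a then 1 else 0)"
        using fr xa 3 unfolding phi_def far_def by auto
      then show ?thesis using reach_ok[OF c(2) assms(4) fr] Lex by simp
    qed
  qed
qed

end

lemma po_finite:
  assumes "periodic_orbit g Q" shows "finite Q" "g ` Q = Q"
proof -
  obtain x N where N: "N > 0" "(g ^^ N) x = x" and Q: "Q = range (\<lambda>k. (g ^^ k) x)"
    using assms unfolding periodic_orbit_def by blast
  show "finite Q" using orbit_period(4)[OF N] Q by simp
  show "g ` Q = Q"
  proof
    show "g ` Q \<subseteq> Q"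
    proof
      fix y assume "y \<in> g ` Q"
      then obtain k where "y = g ((g ^^ k) x)" using Q by auto
      then have "y = (g ^^ Suc k) x" by simp
      then show "y \<in> Q" using Q by blast
    qed
    show "Q \<subseteq> g ` Q"
    proof
      fix z assume z: "z \<in> Q"
      obtain M where M: "M > 0" "(g ^^ M) z = z" using po_from[OF assms z] by blast
      have Qz: "Q = range (\<lambda>k. (g ^^ k) z)" using po_from[OF assms z] by blast
      have "z = g ((g ^^ (M - 1)) z)" using M by (metis Suc_diff_1 comp_apply funpow.simps(2))
      moreover have "(g ^^ (M - 1)) z \<in> Q" using Qz by blast
      ultimately show "z \<in> g ` Q" by blast
    qed
  qed
qed

lemma po_fix_card:
  assumes "periodic_orbit g Q" "z \<in> Q" "g z = z" shows "card Q = 1"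
proof -
  have "Q = range (\<lambda>k. (g ^^ k) z)" using po_from[OF assms(1,2)] by blast
  also have "\<dots> = {z}" using funpow_fix[of g z] assms(3) by auto
  finally show ?thesis by simp
qed

lemma sum_ind: "finite A \<Longrightarrow> (\<Sum>x\<in>A. (if Pr x then 1 else 0 :: real)) = real (card {x\<in>A. Pr x})"
  by (simp add: sum.inter_filter[symmetric])


theorem lemma3p3:
  fixes f :: "real \<Rightarrow> real" and P :: "real set" and n r s :: nat and a :: real
  assumes "cycle f P"
    and "convergent f P"
    and "orp f P = (n * r, n * s)"
    and "coprime r s"
    and "n > 1"
    and "plin f P a = a"
    and "code_nondecreasing f P a"
  shows "\<forall>Q. cycle (plin f P) Q \<longrightarrow> orn (plin f P) Q \<ge> real r / real s"
proof -
  have poP: "periodic_orbit f P" and c2: "2 \<le> card P" using assms(1) unfolding cycle_def by auto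
  have finP: "finite P" and fPP: "f ` P = P" using po_finite[OF poP] by auto
  have nofix: "f p \<noteq> p" if "p \<in> P" for p
    using po_fix_card[OF poP that] c2 by auto
  interpret S: setting f P a
    by unfold_locales (use finP c2 fPP nofix assms(2,6) in auto)
  define \<rho> where "\<rho> = orn f P"
  have ocP: "ocount f P = 2 * card {x\<in>P. x > a \<and> f x < a}"
    by (rule crossing[OF finP fPP S.a_range(3)]) (use S.sideP in auto)
  define B where "B = card {x\<in>P. x > a \<and> f x < a}"
  have rho: "\<rho> = real B / real (card P)" unfolding \<rho>_def orn_def ocP B_def by simp
  have rs: "\<rho> = real r / real s"
  proof -
    have "ocount f P div 2 = n * r" "card P = n * s" using assms(3) unfolding orp_def by auto
    then have "\<rho> = real (n * r) / real (n * s)" unfolding \<rho>_def orn_def by simp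
    then show ?thesis using assms(5) by simp
  qed
  define x0 where "x0 = Min P"
  have x0P: "x0 \<in> P" unfolding x0_def using finP S.ne by simp
  obtain N where N: "N > 0" "(f ^^ N) x0 = x0" and Px0: "P = range (\<lambda>k. (f ^^ k) x0)"
    using po_from[OF poP x0P] by blast
  define k0 where "k0 = (LEAST k. 0 < k \<and> (f ^^ k) x0 = x0)"
  note op = orbit_period[OF N, folded k0_def]
  have Pim: "P = (\<lambda>k. (f ^^ k) x0) ` {..<k0}" using op(4) Px0 by simp
  have cardP: "card P = k0" using Pim card_image[OF op(5)] by simp
  have sumphi: "(\<Sum>j<k0. phi f a ((f ^^ j) x0)) = real B"
  proof -
    have "(\<Sum>j<k0. phi f a ((f ^^ j) x0)) = (\<Sum>p\<in>P. phi f a p)"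
      unfolding Pim by (simp add: sum.reindex[OF op(5)])
    also have "\<dots> = real B" unfolding phi_def B_def using sum_ind[OF finP] by simp
    finally show ?thesis .
  qed
  have k0rho: "real k0 * \<rho> = real B" using rho cardP op(1) by simp
  define L where "L = code f P a"
  define idx where "idx = (\<lambda>y. LEAST k. (f ^^ k) x0 = y)"
  have Ldef: "L y = real (idx y) * \<rho> - (\<Sum>j<idx y. phi f a ((f ^^ j) x0))" for y
    unfolding L_def code_def idx_def \<rho>_def x0_def Let_def by simp
  have idx: "idx y < k0" "(f ^^ idx y) x0 = y" if yP0: "y \<in> P" for y
  proof -
    obtain j where j: "j < k0" "y = (f ^^ j) x0" using yP0 Pim by auto
    show "(f ^^ idx y) x0 = y" unfolding idx_def by (rule LeastI[of _ j]) (use j in simp)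
    have "idx y \<le> j" unfolding idx_def by (rule Least_le) (use j in simp)
    then show "idx y < k0" using j by simp
  qed
  have C1: "L (f y) = L y + \<rho> - phi f a y" if yP: "y \<in> P" for y
  proof -
    define k where "k = idx y"
    have k: "k < k0" "(f ^^ k) x0 = y" using idx[OF yP] unfolding k_def by auto
    show ?thesis
    proof (cases "Suc k < k0")
      case True
      have "idx (f y) = Suc k" unfolding idx_def
      proof (rule Least_equality)
        show "(f ^^ Suc k) x0 = f y" using k by simp
        fix m assume m: "(f ^^ m) x0 = f y"
        show "Suc k \<le> m"
        proof (rule ccontr)
          assume "\<not> Suc k \<le> m"
          then have "m < Suc k" by simp
          then show False using op(3)[of m "Suc k"] True m k by simp
        qed
      qed
      then show ?thesis using Ldef[of "f y"] Ldef[of y] k unfolding k_def[symmetric]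
        by (simp add: algebra_simps)
    next
      case False
      then have sk: "Suc k = k0" using k by simp
      have fy: "f y = x0" using op(2) k sk by (metis funpow.simps(2) comp_apply)
      have "idx x0 = 0" unfolding idx_def by (rule Least_equality) auto
      then have L0: "L (f y) = 0" using fy Ldef[of x0] by simp
      have "L y + \<rho> - phi f a y = real (Suc k) * \<rho> - (\<Sum>j<Suc k. phi f a ((f ^^ j) x0))"
        using Ldef[of y] k unfolding k_def[symmetric] by (simp add: algebra_simps)
      also have "\<dots> = 0" using sk sumphi k0rho by simp
      finally show ?thesis using L0 by simp
    qed
  qed
  have ND: "L x \<le> L y" if "x \<in> P" "y \<in> P" "(x < y \<and> y < a) \<or> (x > y \<and> y > a)" for x y
    using assms(7) that unfolding code_nondecreasing_def L_def by blast
  interpret S2: setting2 f P a L \<rho>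
    by unfold_locales (use C1 ND in auto)
  show ?thesis
  proof (intro allI impI)
    fix Q assume cQ: "cycle (plin f P) Q"
    let ?g = "plin f P"
    have poQ: "periodic_orbit ?g Q" and c2Q: "2 \<le> card Q" using cQ unfolding cycle_def by auto
    have finQ: "finite Q" and gQ: "?g ` Q = Q" using po_finite[OF poQ] by auto
    have aQ: "a \<notin> Q" using po_fix_card[OF poQ _ assms(6)] c2Q by auto
    have inQ: "Min P \<le> x \<and> x \<le> Max P" if "x \<in> Q" for x
      using that gQ S.grange by (metis imageE)
    have ocQ: "ocount ?g Q = 2 * card {x\<in>Q. x > a \<and> ?g x < a}"
      by (rule crossing[OF finQ gQ aQ]) (use S.side0 inQ in auto)
    define BQ where "BQ = card {x\<in>Q. x > a \<and> ?g x < a}"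
    have inj: "inj_on ?g Q" using finite_surj_inj[OF finQ] gQ by simp
    have "(\<Sum>x\<in>Q. S2.Le (?g x)) = (\<Sum>x\<in>Q. S2.Le x)"
      using sum.reindex[OF inj, of S2.Le] gQ by simp
    moreover have "(\<Sum>x\<in>Q. S2.Le (?g x)) \<ge> (\<Sum>x\<in>Q. S2.Le x + \<rho> - (if x > a \<and> ?g x < a then 1 else 0))"
    proof (rule sum_mono)
      fix x assume x: "x \<in> Q"
      have "?g x \<in> Q" using x gQ by blast
      then have "x \<noteq> a" "?g x \<noteq> a" using x aQ by auto
      then show "S2.Le x + \<rho> - (if x > a \<and> ?g x < a then 1 else 0) \<le> S2.Le (?g x)"
        using S2.KEY inQ[OF x] by auto
    qed
    moreover have "(\<Sum>x\<in>Q. S2.Le x + \<rho> - (if x > a \<and> ?g x < a then 1 else 0))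
        = (\<Sum>x\<in>Q. S2.Le x) + real (card Q) * \<rho> - real BQ"
      using sum_ind[OF finQ, of "\<lambda>x. x > a \<and> ?g x < a"] unfolding BQ_def
      by (simp add: sum.distrib sum_subtractf)
    ultimately have "real (card Q) * \<rho> \<le> real BQ" by linarith
    moreover have "card Q > 0" using c2Q by simp
    ultimately have "\<rho> \<le> real BQ / real (card Q)" by (simp add: field_simps)
    moreover have "orn ?g Q = real BQ / real (card Q)" unfolding orn_def ocQ BQ_def by simp
    ultimately show "orn ?g Q \<ge> real r / real s" using rs by simp
  qed
qed

end
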